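(* (i) For every point $\langle y\rangle\in\mathcal Y$, the point $\langle F(y)\rangle$ of $\mathrm{PG}(W)$ belongs to $\mathcal E\setminus\mathcal C$. (ii) The map $\mathcal Y\to\mathcal E\setminus\mathcal C$, $\langle y\rangle\mapsto\langle F(y)\rangle$ (the projection of $\mathcal Y$ from the line $\mathrm{PG}(V)$), is a bijection.
   Context: $q$ is a prime power. Regard $\mathbb F_{q^6}$ as a $6$-dimensional $\mathbb F_q$-vector space and let $\Pi=\mathrm{PG}(\mathbb F_{q^6})\cong\mathrm{PG}(5,q)$, whose points are $\langle x\rangle=\mathbb F_q^*x$, $x\ne0$. Let $\mathcal Y=\{\langle b-1\rangle : b\in\mathbb F_{q^6},\ b^{q^2-q+1}=1,\ b\ne 1\}$. Let $F(X)=X^{q^2}-X^q+X$, an $\mathbb F_q$-linear map of $\mathbb F_{q^6}$; let $V=\ker F$ (a $2$-dimensional $\mathbb F_q$-subspace) and $W=F(\mathbb F_{q^6})=\{z : z+z^q=z^{q^3}+z^{q^4}\}$, a $4$-dimensional $\mathbb F_q$-subspace; $\mathrm{PG}(W)\cong\mathrm{PG}(3,q)$ is identified with the quotient of $\Pi$ by $\mathrm{PG}(V)$ via $\langle x\rangle\mapsto\langle F(x)\rangle$ for $x\notin V$. Let $\Phi(z)=z^{q^2}z+z^{q^2}z^{q}+z^{q}z^{q^3}$; for $z\in W$ one has $\Phi(z)\in\mathbb F_q$, and $\mathcal E=\{\langle z\rangle\in\mathrm{PG}(W):\Phi(z)=0\}$ is a quadric of $\mathrm{PG}(W)$. Note $\mathbb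 F_{q^3}\subseteq W$; let $\mathcal C=\{\langle z\rangle\in\mathcal E: z\in\mathbb F_{q^3}\}$, the section of $\mathcal E$ by the plane $\mathrm{PG}(\mathbb F_{q^3})$ (a non-degenerate conic). *)

theory Defs
  imports "HOL-Computational_Algebra.Primes"
begin

text \<open>The finite field of order q^6 is modelled by a finite field type 'a with CARD('a) = q^6.
  F_q is the subfield of elements fixed by x -> x^q.\<close>

definition subfieldq :: "nat \<Rightarrow> 'a::field set" where
  "subfieldq q = {c. c ^ q = c}"

definition pt :: "nat \<Rightarrow> 'a::field \<Rightarrow> 'a set" where
  "pt q x = {c * x | c. c \<in> subfieldq q \<and> c \<noteq> 0}"

definition Fmap :: "nat \<Rightarrow> 'a::field \<Rightarrow> 'a" where
  "Fmap q x = x ^ (q^2) - x ^ q + x"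

definition Phi :: "nat \<Rightarrow> 'a::field \<Rightarrow> 'a" where
  "Phi q z = z ^ (q^2) * z + z ^ (q^2) * z ^ q + z ^ q * z ^ (q^3)"

definition Wsp :: "nat \<Rightarrow> 'a::field set" where
  "Wsp q = range (Fmap q)"

definition Yset :: "nat \<Rightarrow> 'a::field set set" where
  "Yset q = {pt q (b - 1) | b. b ^ (q^2 - q + 1) = 1 \<and> b \<noteq> 1}"

definition Eset :: "nat \<Rightarrow> 'a::field set set" where
  "Eset q = {pt q z | z. z \<in> Wsp q \<and> z \<noteq> 0 \<and> Phi q z = 0}"

text \<open>Points of E lying in the plane PG(F_{q^3}).\<close>
definition Cset :: "nat \<Rightarrow> 'a::field set set" where
  "Cset q = {pt q z | z. z \<noteq> 0 \<and> z ^ (q^3) = z \<and> Phi q z = 0}"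

definition projF :: "nat \<Rightarrow> 'a::field set \<Rightarrow> 'a set" where
  "projF q P = Fmap q ` P"

end

theory Submission
  imports Defs "HOL-Number_Theory.Residues"
begin


lemma ff_power_card:
  fixes x :: "'a :: {finite,field}"
  shows "x ^ card (UNIV :: 'a set) = x"
proof (cases "x = 0")
  case False
  have "x * (\<Prod>y\<in>UNIV-{0}. x * y) = x * x ^ (card (UNIV :: 'a set) - 1) * \<Prod>(UNIV-{0})"
    by (simp add: prod.distrib mult_ac)
  also have "x * x ^ (card (UNIV :: 'a set) - 1) = x ^ Suc (card (UNIV :: 'a set) - 1)"
    by (subst power_Suc) auto
  also have "Suc (card (UNIV :: 'a set) - 1) = card (UNIV :: 'a set)"
    using finite_UNIV_card_ge_0[where ?'a = 'a] by simp
  also have "(\<Prod>y\<in>UNIV-{0}. x * y) = (\<Prod>y\<in>UNIV-{0}. y)"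
    by (rule prod.reindex_bij_witness[of _ "\<lambda>y. y / x" "\<lambda>y. x * y"]) (use False in auto)
  finally show ?thesis
    by simp
qed (use finite_UNIV_card_ge_0[where ?'a = 'a] in auto)

lemma setup_facts:
  fixes q :: nat
  assumes "\<exists>p k. prime p \<and> k > 0 \<and> q = p ^ k"
    and "card (UNIV :: 'a::{finite,field} set) = q ^ 6"
  shows "q \<ge> 2" "\<And>x y::'a. (x + y) ^ q = x ^ q + y ^ q" "\<And>x::'a. x ^ (q^6) = x"
proof -
  obtain p k where pk: "prime p" "k > 0" "q = p ^ k" using assms(1) by blast
  have "p \<ge> 2" using pk(1) prime_ge_2_nat by blast
  have "p ^ 1 \<le> p ^ k" using pk(2) `p \<ge> 2` by (intro power_increasing) auto
  then show "q \<ge> 2" using pk `p \<ge> 2` by simp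
  show "\<And>x::'a. x ^ (q^6) = x" using ff_power_card assms(2) by metis
  have cp: "CHAR('a) > 0" by (rule finite_imp_CHAR_pos) simp
  have pc: "prime CHAR('a)" by (rule prime_CHAR_semidom[OF cp])
  have "CHAR('a) dvd p ^ (k * 6)" using CHAR_dvd_CARD[where 'a='a] assms(2) pk(3)
    by (simp add: power_mult)
  then have "CHAR('a) dvd p" using pc prime_dvd_power by blast
  then have cpq: "CHAR('a) = p" using pc pk(1) by (simp add: primes_dvd_imp_eq)
  show "\<And>x y::'a. (x + y) ^ q = x ^ q + y ^ q"
    by (rule freshmans_dream'[OF pc]) (simp add: cpq pk(3))
qed


locale F6 =
  fixes q :: nat and s :: "'a::{finite,field} \<Rightarrow> 'a"
  assumes s_def: "s = (\<lambda>x. x ^ q)"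
    and s_add: "s (x + y) = s x + s y"
    and q2: "q \<ge> 2"
    and six: "x ^ (q^6) = x"
begin

lemma s_mult: "s (x * y) = s x * s y" by (simp add: s_def power_mult_distrib)
lemma s_one[simp]: "s 1 = 1" by (simp add: s_def)
lemma s_zero[simp]: "s 0 = 0" using q2 by (simp add: s_def)
lemma s_eq0[simp]: "s x = 0 \<longleftrightarrow> x = 0" using q2 by (simp add: s_def)
lemma s_minus: "s (- x) = - s x"
proof -
  have "s (- x) + s x = 0" using s_add[of "-x" x] by simp
  thus ?thesis by (simp add: add_eq_0_iff)
qed
lemma s_diff: "s (x - y) = s x - s y"
  using s_add[of x "-y"] s_minus[of y] by simp
lemma s_div: "s (x / y) = s x / s y" by (simp add: s_def power_divide)
lemma s_inv: "s (inverse x) = inverse (s x)" by (simp add: s_def power_inverse)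
lemmas s_simps = s_add s_mult s_diff s_div s_minus s_inv

lemma s2: "x ^ (q^2) = s (s x)" by (simp add: s_def power2_eq_square power_mult)
lemma s3: "x ^ (q^3) = s (s (s x))"
  by (simp add: s_def power_mult[symmetric] mult.commute power3_eq_cube)
lemma s6: "s (s (s (s (s (s x))))) = x"
proof -
  have "q^6 = q*q*q*q*q*q" by (simp add: eval_nat_numeral)
  then have "x ^ (q*q*q*q*q*q) = x" using six by metis
  thus ?thesis by (simp add: s_def power_mult)
qed
lemma s_inj: "s x = s y \<Longrightarrow> x = y"
  by (metis s6)

lemma Fmap_s: "Fmap q x = s (s x) - s x + x" by (simp add: Fmap_def s2 s_def)
lemma Phi_s: "Phi q z = s (s z) * z + s (s z) * s z + s z * s (s (s z))"
  by (simp add: Phi_def s2 s3 s_def)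
lemma Phi_comm: "Phi q (s z) = s (Phi q z)"
  by (simp add: Phi_s s_simps)

lemma sub_iff: "(c::'a) \<in> subfieldq q \<longleftrightarrow> s c = c" by (simp add: subfieldq_def s_def)

lemma pt_mem: "(x::'a) \<in> pt q x"
proof -
  have "(1::'a) \<in> subfieldq q" using sub_iff by simp
  then show ?thesis unfolding pt_def by force
qed

lemma pt_eq: assumes "pt q x = pt q (y::'a)" shows "\<exists>c. s c = c \<and> c \<noteq> 0 \<and> x = c * y"
  using pt_mem[of x] assms unfolding pt_def sub_iff by auto

lemma pt_scale: assumes "s c = c" "c \<noteq> 0" shows "pt q (c * x) = pt q x"
proof
  show "pt q (c * x) \<subseteq> pt q x"
  proof
    fix u assume "u \<in> pt q (c*x)"
    then obtain d where d: "s d = d" "d \<noteq> 0" "u = d * (c*x)" unfolding pt_def sub_iff by auto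
    then have "s (d*c) = d*c" "d*c \<noteq> 0" "u = (d*c)*x" using assms by (auto simp: s_mult)
    then show "u \<in> pt q x" unfolding pt_def sub_iff by blast
  qed
  show "pt q x \<subseteq> pt q (c * x)"
  proof
    fix u assume "u \<in> pt q x"
    then obtain d where d: "s d = d" "d \<noteq> 0" "u = d * x" unfolding pt_def sub_iff by auto
    then have "s (d/c) = d/c" "d/c \<noteq> 0" "u = (d/c)*(c*x)" using assms by (auto simp: s_div)
    then show "u \<in> pt q (c*x)" unfolding pt_def sub_iff by blast
  qed
qed

lemma Fmap_scale: "s c = c \<Longrightarrow> Fmap q (c * x) = c * Fmap q x"
  by (simp add: Fmap_s s_mult algebra_simps)

lemma Phi_scale: "s c = c \<Longrightarrow> Phi q (c * x) = c^2 * Phi q x"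
  by (simp add: Phi_s s_mult algebra_simps power2_eq_square)

lemma projF_pt: "projF q (pt q x) = pt q (Fmap q (x::'a))"
proof -
  have "projF q (pt q x) = {Fmap q (c * x) | c::'a. s c = c \<and> c \<noteq> 0}"
    unfolding projF_def pt_def sub_iff by auto
  also have "\<dots> = pt q (Fmap q x)" unfolding pt_def sub_iff
    using Fmap_scale by metis
  finally show ?thesis .
qed


lemma Ylem:
  assumes R: "s (s b) * b = s b" and b1: "b \<noteq> 1" and b0: "b \<noteq> 0"
  shows "Fmap q (b - 1) \<noteq> 0" "Phi q (Fmap q (b - 1)) = 0"
    "s (s (s (Fmap q (b - 1)))) = Fmap q (b - 1) / s b" "s b \<noteq> 1" "s b \<noteq> 0"
    "Fmap q (b - 1) = (b - s b) * (b - 1) / b"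
    "s (Fmap q (b - 1)) = (b - 1) * (s b - 1) / b"
    "s (s b) = s b / b"
proof -
  define c where "c = s b"
  have c0: "c \<noteq> 0" using b0 by (simp add: c_def)
  have c1: "c \<noteq> 1" using b1 s_inj[of b 1] by (auto simp: c_def)
  have bc: "b \<noteq> c"
  proof
    assume "b = c"
    then have "s (s b) = b" by (simp add: c_def)
    then have "b * b = b * 1" using R by (metis \<open>b = c\<close> c_def mult_1_right)
    then show False using b0 b1 by (metis mult_left_cancel)
  qed
  have sb: "s b = c" by (simp add: c_def)
  have sc: "s c = c / b" using R b0 by (simp add: c_def field_simps)
  have sc2: "s (c / b) = 1 / b" using sc sb c0 by (simp add: s_div)
  have sc3: "s (1 / b) = 1 / c" using sb by (simp add: s_div)
  have sc4: "s (1 / c) = b / c" using sc c0 b0 by (simp add: s_div)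
  have w: "Fmap q (b - 1) = c / b - c + b - 1" by (simp add: Fmap_s s_diff sb sc)
  have sw: "s (Fmap q (b - 1)) = 1 / b - c / b + c - 1"
    unfolding w by (simp add: s_diff s_add sb sc sc2 del: s_div)
  have ssw: "s (s (Fmap q (b - 1))) = 1 / c - 1 / b + c / b - 1"
    unfolding sw by (simp add: s_diff s_add sb sc sc2 sc3 del: s_div)
  have sssw: "s (s (s (Fmap q (b - 1)))) = b / c - 1 / c + 1 / b - 1"
    unfolding ssw by (simp add: s_diff s_add sb sc sc2 sc3 sc4 del: s_div)
  have wf: "Fmap q (b - 1) = (b - c) * (b - 1) / b" unfolding w using b0 by (simp add: field_simps)
  then show "Fmap q (b - 1) = (b - s b) * (b - 1) / b" by (simp add: c_def)
  show "Fmap q (b - 1) \<noteq> 0" unfolding wf using b0 b1 bc by simp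
  have f1: "s (Fmap q (b - 1)) = (b-1)*(c-1)/b" unfolding sw using b0 by (simp add: field_simps)
  have f2: "s (s (Fmap q (b - 1))) = (c-1)*(c-b)/(b*c)" unfolding ssw using b0 c0 by (simp add: field_simps)
  have f3: "s (s (s (Fmap q (b - 1)))) = (b-c)*(b-1)/(b*c)" unfolding sssw using b0 c0 by (simp add: field_simps)
  have "Phi q (Fmap q (b - 1)) = (c-1)*(c-b)/(b*c) * ((b-c)*(b-1)/b) + (c-1)*(c-b)/(b*c) * ((b-1)*(c-1)/b) + (b-1)*(c-1)/b * ((b-c)*(b-1)/(b*c))"
    unfolding Phi_s unfolding f3 unfolding f2 unfolding f1 unfolding wf ..
  also have "\<dots> = ((c-1)*(b-1)*(c-b)*((b-c) + (c-1) - (b-1))) / (b*b*c)"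
    by (simp add: add_divide_distrib diff_divide_distrib algebra_simps)
  also have "\<dots> = 0" by simp
  finally show "Phi q (Fmap q (b - 1)) = 0" .
  show "s (s (s (Fmap q (b - 1)))) = Fmap q (b - 1) / s b" unfolding sssw unfolding w sb using b0 c0
    by (simp add: field_simps)
  show "s b \<noteq> 1" "s b \<noteq> 0" using c0 c1 by (auto simp: c_def)
  show "s (Fmap q (b - 1)) = (b - 1) * (s b - 1) / b" unfolding sw unfolding sb using b0
    by (simp add: field_simps)
  show "s (s b) = s b / b" using sc by (simp add: c_def)
qed


lemma Elem:
  assumes zx: "z = Fmap q x" and z0: "z \<noteq> 0" and Pz: "Phi q z = 0" and nC: "s (s (s z)) \<noteq> z"
  shows "\<exists>b l. s (s b) * b = s b \<and> b \<noteq> 1 \<and> b \<noteq> 0 \<and> s l = l \<and> l \<noteq> 0 \<and> Fmap q (b - 1) = l * z"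
proof -
  define z1 where "z1 = s z"
  define z2 where "z2 = s z1"
  define z3 where "z3 = s z2"
  define z4 where "z4 = s z3"
  define z5 where "z5 = s z4"
  have sz5: "s z5 = z" unfolding z5_def z4_def z3_def z2_def z1_def by (rule s6)
  have nz: "z1 \<noteq> 0" "z2 \<noteq> 0" "z3 \<noteq> 0" "z4 \<noteq> 0" "z5 \<noteq> 0"
    using z0 by (simp_all add: z1_def z2_def z3_def z4_def z5_def)
  define x1 where "x1 = s x"
  define x2 where "x2 = s x1"
  define x3 where "x3 = s x2"
  define x4 where "x4 = s x3"
  define x5 where "x5 = s x4"
  have sx5: "s x5 = x" unfolding x5_def x4_def x3_def x2_def x1_def by (rule s6)
  have ez: "z = x2 - x1 + x" unfolding zx Fmap_s x2_def x1_def ..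
  have ez1: "z1 = x3 - x2 + x1" unfolding z1_def ez by (simp add: s_diff s_add x3_def x2_def x1_def)
  have ez2: "z2 = x4 - x3 + x2" unfolding z2_def ez1 by (simp add: s_diff s_add x4_def x3_def x2_def)
  have ez3: "z3 = x5 - x4 + x3" unfolding z3_def ez2 by (simp add: s_diff s_add x5_def x4_def x3_def)
  have ez4: "z4 = x - x5 + x4" unfolding z4_def ez3 by (simp add: s_diff s_add sx5 x5_def[symmetric] x4_def[symmetric])
  have W0: "z + z1 = z3 + z4" unfolding ez ez1 ez3 ez4 by simp
  have "s (s (z + z1)) = s (s (z3 + z4))" using W0 by simp
  then have W2: "z2 + z3 = z5 + z" by (simp add: s_add s6 z2_def z3_def z4_def z5_def z1_def)
  have P0: "z2 * z + z2 * z1 + z1 * z3 = 0" using Pz unfolding Phi_s z3_def z2_def z1_def .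
  have "Phi q z3 = s (s (s (Phi q z)))" unfolding z3_def z2_def z1_def by (simp add: Phi_comm)
  then have "Phi q z3 = 0" using Pz by simp
  then have P3: "z5 * z3 + z5 * z4 + z4 * z = 0" unfolding Phi_s z5_def[symmetric] z4_def[symmetric]
    unfolding z5_def[symmetric] sz5 .
  have P3': "z5 * (z + z1) + z4 * z = 0" using P3 W0 by (simp add: algebra_simps)
  have A: "z1 * z3 * z5 = z * z2 * z4"
  proof -
    have "z5 * (z2 * z + z2 * z1 + z1 * z3) - z2 * (z5 * (z + z1) + z4 * z) = 0" using P0 P3' by simp
    then show ?thesis by (simp add: algebra_simps)
  qed
  define b where "b = z5 / z2"
  have sb: "s b = z / z3" unfolding b_def by (simp add: s_div sz5 z3_def)
  have ssb: "s (s b) = z1 / z4" unfolding sb by (simp add: s_div z1_def z4_def)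
  have R: "s (s b) * b = s b" unfolding ssb unfolding sb unfolding b_def using nz A by (simp add: field_simps)
  have b0: "b \<noteq> 0" using nz by (simp add: b_def)
  have b1: "b \<noteq> 1"
  proof
    assume "b = 1"
    then have "z5 = z2" using nz by (simp add: b_def)
    then have "s z5 = s z2" by simp
    then have "z = z3" by (simp add: sz5 z3_def)
    then show False using nC by (simp add: z3_def z2_def z1_def)
  qed
  note Y = Ylem[OF R b1 b0]
  define w where "w = Fmap q (b - 1)"
  define c where "c = s b"
  have wf: "w = (b - c) * (b - 1) / b" using Y(6) by (simp add: w_def c_def)
  have swf: "s w = (b - 1) * (c - 1) / b" using Y(7) by (simp add: w_def c_def)
  have w0: "w \<noteq> 0" using Y(1) by (simp add: w_def)
  have z5e: "z5 = z2 + z3 - z" using W2 by (simp add: algebra_simps)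
  have key0: "(z - z3) * z * z2 = (z5 * z3 - z * z2) * z1"
  proof -
    have "(z5 * z3 - z * z2) * z1 - (z - z3) * z * z2 = - ((z - z3) * (z2 * z + z2 * z1 + z1 * z3))"
      unfolding z5e by (simp add: algebra_simps)
    then show ?thesis using P0 by simp
  qed
  have key: "(c - 1) * z = (b - c) * z1"
  proof -
    have "(c - 1) * z = (z - z3) * z * z2 / (z2 * z3)" unfolding c_def unfolding sb using nz
      by (simp add: field_simps)
    also have "\<dots> = (z5 * z3 - z * z2) * z1 / (z2 * z3)" using key0 by simp
    also have "\<dots> = (b - c) * z1" unfolding c_def unfolding sb unfolding b_def using nz by (simp add: field_simps)
    finally show ?thesis .
  qed
  define l where "l = w / z"
  have sl: "s l = l"
  proof -
    have "s l = s w / z1" by (simp add: l_def s_div z1_def)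
    also have "\<dots> = (b - 1) * ((c - 1) * z) / (b * z * z1)" unfolding swf using nz z0 b0
      by (simp add: field_simps)
    also have "\<dots> = (b - 1) * ((b - c) * z1) / (b * z * z1)" using key by simp
    also have "\<dots> = l" unfolding l_def wf using nz z0 b0 by (simp add: field_simps)
    finally show ?thesis .
  qed
  have l0: "l \<noteq> 0" using w0 z0 by (simp add: l_def)
  have "Fmap q (b - 1) = l * z" using z0 by (simp add: l_def w_def)
  then show ?thesis using R b1 b0 sl l0 by blast
qed


lemma YN: "b ^ (q^2 - q + 1) = 1 \<longleftrightarrow> (b \<noteq> 0 \<and> s (s b) * b = s b)"
proof -
  have qq: "q \<le> q^2" using q2 by (simp add: power2_eq_square)
  have e: "q^2 + 1 = (q^2 - q + 1) + q" using qq by simp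
  have N0: "q^2 - q + 1 \<noteq> 0" by simp
  have "s (s b) * b = b ^ (q^2 + 1)" by (simp add: s2)
  also have "\<dots> = b ^ (q^2 - q + 1) * s b" unfolding e by (simp add: power_add s_def)
  finally have key: "s (s b) * b = b ^ (q^2 - q + 1) * s b" .
  show ?thesis
  proof
    assume h: "b ^ (q^2 - q + 1) = 1"
    then have "b \<noteq> 0" using N0 by (metis power_0_left zero_neq_one)
    then show "b \<noteq> 0 \<and> s (s b) * b = s b" using key h by (metis mult_1_left)
  next
    assume h: "b \<noteq> 0 \<and> s (s b) * b = s b"
    then have "b ^ (q^2 - q + 1) * s b = 1 * s b" using key by (metis mult_1_left)
    then show "b ^ (q^2 - q + 1) = 1" using h by (metis mult_cancel_right s_eq0)
  qed
qed

lemma Yset_iff: "(P::'a set) \<in> Yset q \<longleftrightarrow> (\<exists>b. P = pt q (b - 1) \<and> b \<noteq> 0 \<and> s (s b) * b = s b \<and> b \<noteq> 1)"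
  unfolding Yset_def using YN by auto

lemma part1:
  assumes "pt q (y::'a) \<in> Yset q"
  shows "Fmap q y \<noteq> 0 \<and> projF q (pt q y) = pt q (Fmap q y) \<and> pt q (Fmap q y) \<in> Eset q - Cset q"
proof -
  obtain b where b: "pt q y = pt q (b - 1)" "b \<noteq> 0" "s (s b) * b = s b" "b \<noteq> 1"
    using assms Yset_iff by blast
  note Y = Ylem[OF b(3) b(4) b(2)]
  obtain m where m: "s m = m" "m \<noteq> 0" "y = m * (b - 1)" using pt_eq[OF b(1)] by blast
  have Fy: "Fmap q y = m * Fmap q (b - 1)" using m Fmap_scale by simp
  have F0: "Fmap q y \<noteq> 0" using Fy m(2) Y(1) by simp
  have W: "Fmap q y \<in> Wsp q" unfolding Wsp_def by simp
  have PF: "Phi q (Fmap q y) = 0" using Fy Phi_scale[OF m(1)] Y(2) by simp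
  have inE: "pt q (Fmap q y) \<in> Eset q"
    unfolding Eset_def using F0 W PF by blast
  have notC: "pt q (Fmap q y) \<notin> Cset q"
  proof
    assume "pt q (Fmap q y) \<in> Cset q"
    then obtain z where z: "pt q (Fmap q y) = pt q z" "z \<noteq> 0" "z ^ (q^3) = z" unfolding Cset_def by blast
    obtain l where l: "s l = l" "Fmap q y = l * z" using pt_eq[OF z(1)] by blast
    have "s (s (s (Fmap q y))) = Fmap q y" using l z(3) by (simp add: s_mult s3)
    moreover have "s (s (s (Fmap q y))) = m * (Fmap q (b - 1) / s b)" using Fy m(1) Y(3) by (simp add: s_mult)
    ultimately have "m * (Fmap q (b - 1) / s b) = m * Fmap q (b - 1)" using Fy by simp
    then have "Fmap q (b - 1) / s b = Fmap q (b - 1)" using m(2) by (metis mult_left_cancel)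
    then have "s b = 1" using Y(1) Y(5) by (simp add: field_simps)
    then show False using Y(4) by simp
  qed
  show ?thesis using F0 projF_pt inE notC by simp
qed

lemma main:
  "(\<forall>y::'a. pt q y \<in> Yset q \<longrightarrow>
            Fmap q y \<noteq> 0 \<and> projF q (pt q y) = pt q (Fmap q y) \<and>
            pt q (Fmap q y) \<in> Eset q - Cset q)
       \<and> bij_betw (projF q) (Yset q :: 'a set set) (Eset q - Cset q)"
proof (rule conjI)
  show "\<forall>y::'a. pt q y \<in> Yset q \<longrightarrow>
            Fmap q y \<noteq> 0 \<and> projF q (pt q y) = pt q (Fmap q y) \<and>
            pt q (Fmap q y) \<in> Eset q - Cset q" using part1 by blast
next
  show "bij_betw (projF q) (Yset q :: 'a set set) (Eset q - Cset q)"
    unfolding bij_betw_def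
  proof (intro conjI)
    show "inj_on (projF q) (Yset q :: 'a set set)"
    proof (rule inj_onI)
      fix P P' :: "'a set" assume P: "P \<in> Yset q" and P': "P' \<in> Yset q" and eq: "projF q P = projF q P'"
      obtain b where b: "P = pt q (b - 1)" "b \<noteq> 0" "s (s b) * b = s b" "b \<noteq> 1"
        using P Yset_iff by blast
      obtain b' where b': "P' = pt q (b' - 1)" "b' \<noteq> 0" "s (s b') * b' = s b'" "b' \<noteq> 1"
        using P' Yset_iff by blast
      note Y = Ylem[OF b(3) b(4) b(2)]
      note Y' = Ylem[OF b'(3) b'(4) b'(2)]
      have "pt q (Fmap q (b - 1)) = pt q (Fmap q (b' - 1))" using eq b(1) b'(1) projF_pt by simp
      then obtain l where l: "s l = l" "Fmap q (b - 1) = l * Fmap q (b' - 1)" using pt_eq by blast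
      have "Fmap q (b - 1) / s b = s (s (s (Fmap q (b - 1))))" using Y(3) by simp
      also have "\<dots> = l * (Fmap q (b' - 1) / s b')" using l Y'(3) by (simp add: s_mult)
      also have "\<dots> = Fmap q (b - 1) / s b'" using l(2) by simp
      finally have "s b = s b'" using Y(1) Y(5) Y'(5) by (simp add: field_simps)
      then have "b = b'" by (rule s_inj)
      then show "P = P'" using b(1) b'(1) by simp
    qed
  next
    show "projF q ` Yset q = (Eset q - Cset q :: 'a set set)"
    proof
      show "projF q ` Yset q \<subseteq> (Eset q - Cset q :: 'a set set)"
      proof
        fix Q :: "'a set" assume "Q \<in> projF q ` Yset q"
        then obtain P where P: "P \<in> Yset q" "Q = projF q P" by blast
        obtain b where b: "P = pt q (b - 1)" using P Yset_iff by blast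
        show "Q \<in> Eset q - Cset q" using part1[of "b - 1"] P b by simp
      qed
      show "(Eset q - Cset q :: 'a set set) \<subseteq> projF q ` Yset q"
      proof
        fix Q :: "'a set" assume Q: "Q \<in> Eset q - Cset q"
        then obtain z where z: "Q = pt q z" "z \<in> Wsp q" "z \<noteq> 0" "Phi q z = 0"
          unfolding Eset_def by blast
        obtain x where x: "z = Fmap q x" using z(2) unfolding Wsp_def by blast
        have nC: "s (s (s z)) \<noteq> z"
        proof
          assume "s (s (s z)) = z"
          then have "Q \<in> Cset q" unfolding Cset_def using z by (auto simp: s3)
          then show False using Q by simp
        qed
        obtain b l where bl: "s (s b) * b = s b" "b \<noteq> 1" "b \<noteq> 0" "s l = l" "l \<noteq> 0"
          "Fmap q (b - 1) = l * z" using Elem[OF x z(3) z(4) nC] by blast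
        have "pt q (b - 1) \<in> Yset q" using Yset_iff bl by blast
        moreover have "Q = projF q (pt q (b - 1))" using projF_pt bl pt_scale z(1) by simp
        ultimately show "Q \<in> projF q ` Yset q" by blast
      qed
    qed
  qed
qed

end

theorem mainTheorem15:
  fixes q :: nat
  assumes "\<exists>p k. prime p \<and> k > 0 \<and> q = p ^ k"
    and "card (UNIV :: 'a::{finite,field} set) = q ^ 6"
  shows "(\<forall>y::'a. pt q y \<in> Yset q \<longrightarrow>
            Fmap q y \<noteq> 0 \<and> projF q (pt q y) = pt q (Fmap q y) \<and>
            pt q (Fmap q y) \<in> Eset q - Cset q)
       \<and> bij_betw (projF q) (Yset q :: 'a set set) (Eset q - Cset q)"
proof -
  note f = setup_facts[OF assms]
  interpret F6 q "\<lambda>x::'a. x ^ q"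
    by unfold_locales (use f in auto)
  show ?thesis by (rule main)
qed

end
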